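(* Let $K$ be a field of characteristic $p>0$ such that $K/k$ is a finitely generated field extension, where $k=\bigcap_{n\ge0}K^{p^n}$. Let $W_\bullet$ be a power tower on $K$. Then \[\dim_{W_1}(K)\ge\dim_{W_2}(W_1)\ge\cdots\ge\dim_{W_n}(W_{n-1})\ge\cdots\ge0.\]
   Context: A power tower on $K$ is a sequence of subfields $W_0,W_1,W_2,\ldots$ of $K$ such that $W_j=W_i\cdot K^{p^j}$ whenever $j\le i$, where $\cdot$ denotes the compositum in $K$. *)

theory Defs
  imports "HOL-Algebra.Algebra" "HOL-Computational_Algebra.Primes"
begin

definition frob_image :: "('a, 'b) ring_scheme \<Rightarrow> nat \<Rightarrow> nat \<Rightarrow> 'a set" where
  "frob_image R p n = {x [^]\<^bsub>R\<^esub> (p ^ n) | x. x \<in> carrier R}"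

definition compositum :: "('a, 'b) ring_scheme \<Rightarrow> 'a set \<Rightarrow> 'a set \<Rightarrow> 'a set" where
  "compositum R A B = generate_field R (A \<union> B)"

definition power_tower :: "('a, 'b) ring_scheme \<Rightarrow> nat \<Rightarrow> (nat \<Rightarrow> 'a set) \<Rightarrow> bool" where
  "power_tower R p W \<longleftrightarrow>
     (\<forall>i. subfield (W i) R) \<and>
     (\<forall>i j. j \<le> i \<longrightarrow> W j = compositum R (W i) (frob_image R p j))"

end

theory Submission
  imports Defs
begin

lemma (in cring) binomial_pow:
  assumes a: "a \<in> carrier R" and b: "b \<in> carrier R"
  shows "(a \<oplus> b) [^] n = (\<Oplus>k\<in>{..n}. add_pow R (n choose k) (a [^] k \<otimes> b [^] (n - k)))"
proof (induction n)
  case 0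
  then show ?case using a b by simp
next
  case (Suc n)
  define T where "T = (\<lambda>k. a [^] k \<otimes> b [^] (Suc n - k))"
  have T: "\<And>k. T k \<in> carrier R" using a b by (simp add: T_def)
  define f where "f = (\<lambda>k. add_pow R (n choose k) (T k))"
  define g where "g = (\<lambda>k. if k = 0 then \<zero> else add_pow R (n choose (k - 1)) (T k))"
  have fc: "f \<in> A \<rightarrow> carrier R" for A using T by (simp add: f_def)
  have gc: "g \<in> A \<rightarrow> carrier R" for A using T by (simp add: g_def)
  define S where "S = (\<Oplus>k\<in>{..n}. add_pow R (n choose k) (a [^] k \<otimes> b [^] (n - k)))"
  have S: "S \<in> carrier R"
    unfolding S_def using a b by (intro finsum_closed) auto
  have "(a \<oplus> b) [^] Suc n = (a \<oplus> b) [^] n \<otimes> (a \<oplus> b)" by simp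
  also have "\<dots> = S \<otimes> a \<oplus> S \<otimes> b"
    using Suc S a b by (simp add: r_distr S_def)
  also have "S \<otimes> a = (\<Oplus>k\<in>{..n}. add_pow R (n choose k) (a [^] k \<otimes> b [^] (n - k)) \<otimes> a)"
    unfolding S_def using a b by (intro finsum_ldistr) auto
  also have "\<dots> = (\<Oplus>k\<in>{..n}. g (Suc k))"
  proof (rule finsum_cong'[OF refl])
    show "(\<lambda>k. g (Suc k)) \<in> {..n} \<rightarrow> carrier R" using gc by auto
    fix k assume "k \<in> {..n}" 
    have "a [^] k \<otimes> b [^] (n - k) \<otimes> a = a [^] Suc k \<otimes> b [^] (Suc n - Suc k)"
      using a b by (simp add: m_ac)
    then show "add_pow R (n choose k) (a [^] k \<otimes> b [^] (n - k)) \<otimes> a = g (Suc k)"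
      using a b by (simp add: g_def T_def add_pow_ldistr)
  qed
  also have "S \<otimes> b = (\<Oplus>k\<in>{..n}. add_pow R (n choose k) (a [^] k \<otimes> b [^] (n - k)) \<otimes> b)"
    unfolding S_def using a b by (intro finsum_ldistr) auto
  also have "\<dots> = (\<Oplus>k\<in>{..n}. f k)"
  proof (rule finsum_cong'[OF refl])
    show "f \<in> {..n} \<rightarrow> carrier R" using fc by auto
    fix k assume "k \<in> {..n}" 
    then have "Suc n - k = Suc (n - k)" by simp
    then have "a [^] k \<otimes> b [^] (n - k) \<otimes> b = a [^] k \<otimes> b [^] (Suc n - k)"
      using a b by (simp add: m_ac)
    then show "add_pow R (n choose k) (a [^] k \<otimes> b [^] (n - k)) \<otimes> b = f k"
      using a b by (simp add: f_def T_def add_pow_ldistr)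
  qed
  also have "(\<Oplus>k\<in>{..n}. g (Suc k)) = (\<Oplus>k\<in>{..Suc n}. g k)"
  proof -
    have c: "(\<Oplus>k\<in>{..n}. g (Suc k)) \<in> carrier R" using gc by (intro finsum_closed) auto
    have "g 0 = \<zero>" by (simp add: g_def)
    then show ?thesis using finsum_Suc2[of g n] gc c by simp
  qed
  also have "(\<Oplus>k\<in>{..n}. f k) = (\<Oplus>k\<in>{..Suc n}. f k)"
  proof -
    have c: "(\<Oplus>k\<in>{..n}. f k) \<in> carrier R" using fc by (intro finsum_closed) auto
    have "f (Suc n) = \<zero>" by (simp add: f_def binomial_eq_0)
    then show ?thesis using finsum_Suc[of f n] fc c by simp
  qed
  also have "(\<Oplus>k\<in>{..Suc n}. g k) \<oplus> (\<Oplus>k\<in>{..Suc n}. f k) = (\<Oplus>k\<in>{..Suc n}. g k \<oplus> f k)"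
    using gc fc by (simp add: finsum_addf)
  also have "\<dots> = (\<Oplus>k\<in>{..Suc n}. add_pow R (Suc n choose k) (a [^] k \<otimes> b [^] (Suc n - k)))"
  proof (rule finsum_cong'[OF refl])
    show "(\<lambda>k. add_pow R (Suc n choose k) (a [^] k \<otimes> b [^] (Suc n - k))) \<in> {..Suc n} \<rightarrow> carrier R"
      using a b by auto
    fix k assume "k \<in> {..Suc n}"
    have e: "a [^] k \<otimes> b [^] (Suc n - k) = T k" by (simp add: T_def)
    show "g k \<oplus> f k = add_pow R (Suc n choose k) (a [^] k \<otimes> b [^] (Suc n - k))"
    proof (cases k)
      case 0
      have "g 0 = \<zero>" "f 0 = add_pow R (1::nat) (T 0)" by (simp_all add: g_def f_def del: add.nat_pow_Suc)
      then have "g k \<oplus> f k = add_pow R (Suc n choose k) (T k)" using T[of 0] 0 by (simp del: add.nat_pow_Suc)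
      then show ?thesis by (simp only: T_def)
    next
      case (Suc j)
      have "g k \<oplus> f k = add_pow R (Suc n choose k) (T k)"
        using T add.nat_pow_mult[of "T k" "n choose j" "n choose Suc j"]
        by (simp add: Suc f_def g_def add.m_comm)
      then show ?thesis by (simp only: T_def)
    qed
  qed
  finally show ?case .
qed



lemma (in cring) frob_add:
  assumes a: "a \<in> carrier R" and b: "b \<in> carrier R"
    and p: "Factorial_Ring.prime (p::nat)" and char: "add_pow R p \<one> = \<zero>"
  shows "(a \<oplus> b) [^] p = a [^] p \<oplus> b [^] p"
proof -
  define h where "h = (\<lambda>k. add_pow R (p choose k) (a [^] k \<otimes> b [^] (p - k)))"
  have hc: "h \<in> A \<rightarrow> carrier R" for A using a b by (simp add: h_def)
  obtain q where q: "p = Suc q" using p by (cases p) auto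
  have zero: "h k = \<zero>" if "0 < k" "k < p" for k
  proof -
    have "p dvd (p choose k)" using dvd_choose_prime[of k p] that p by auto
    then obtain m where m: "p choose k = p * m" by auto
    have x: "a [^] k \<otimes> b [^] (p - k) \<in> carrier R" using a b by simp
    have "add_pow R p (a [^] k \<otimes> b [^] (p - k)) = add_pow R p \<one> \<otimes> (a [^] k \<otimes> b [^] (p - k))"
      using add_pow_ldistr[of \<one> "a [^] k \<otimes> b [^] (p - k)" p] x by simp
    also have "\<dots> = \<zero>" using char x by simp
    finally have "add_pow R p (a [^] k \<otimes> b [^] (p - k)) = \<zero>" .
    then show ?thesis
      unfolding h_def m using add.nat_pow_pow[OF x, of p m] add.nat_pow_pow[OF x, of m p] by (simp add: mult.commute)
  qed
  have "(a \<oplus> b) [^] p = (\<Oplus>k\<in>{..p}. h k)" unfolding h_def by (rule binomial_pow[OF a b])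
  also have "\<dots> = h p \<oplus> (\<Oplus>k\<in>{..q}. h k)" unfolding q using hc by (simp add: finsum_Suc)
  also have "(\<Oplus>k\<in>{..q}. h k) = h 0 \<oplus> (\<Oplus>k\<in>{Suc 0..q}. h k)"
    using add.finprod_0'[of h q] hc by simp
  also have "(\<Oplus>k\<in>{Suc 0..q}. h k) = (\<Oplus>k\<in>{Suc 0..q}. \<zero>)"
    by (rule finsum_cong'[OF refl]) (use zero q in auto)
  also have "h p = a [^] p" using a by (simp add: h_def)
  also have "h 0 = b [^] p" using b by (simp add: h_def)
  finally show ?thesis using a b by (simp add: add.m_comm)
qed



locale frobfield = field R for R (structure) +
  fixes p :: nat
  assumes p_prime: "Factorial_Ring.prime p"
    and charp: "add_pow R p \<one> = \<zero>"
begin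

lemma p_pos: "p > 0" using p_prime prime_gt_0_nat by blast

lemma frob_mult: "x \<in> carrier R \<Longrightarrow> y \<in> carrier R \<Longrightarrow> (x \<otimes> y) [^] p = x [^] p \<otimes> y [^] p"
  by (simp add: pow_mult_distrib m_comm)

lemma frob_addR: "x \<in> carrier R \<Longrightarrow> y \<in> carrier R \<Longrightarrow> (x \<oplus> y) [^] p = x [^] p \<oplus> y [^] p"
  using frob_add p_prime charp by blast

lemma frob_hom: "(\<lambda>x. x [^] p) \<in> ring_hom R R"
  by (rule ring_hom_memI) (auto simp: frob_mult frob_addR)

lemma frob_rhr: "ring_hom_ring R R (\<lambda>x. x [^] p)"
  by (rule ring_hom_ringI2[OF ring_axioms ring_axioms frob_hom])

lemma pow_nonzero: "x \<in> carrier R \<Longrightarrow> x \<noteq> \<zero> \<Longrightarrow> x [^] (n::nat) \<noteq> \<zero>"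
proof -
  assume "x \<in> carrier R" "x \<noteq> \<zero>"
  then have "x \<in> Units R" using field_Units by auto
  then have "x [^] n \<in> Units R" by (rule Units_pow_closed)
  then show ?thesis using field_Units by auto
qed

lemma inv_pow: "x \<in> carrier R \<Longrightarrow> x \<noteq> \<zero> \<Longrightarrow> inv (x [^] (n::nat)) = (inv x) [^] n"
proof -
  assume x: "x \<in> carrier R" "x \<noteq> \<zero>"
  then have xu: "x \<in> Units R" using field_Units by auto
  have "x [^] n \<otimes> (inv x) [^] n = (x \<otimes> inv x) [^] n"
    using x xu by (intro nat_pow_distrib[symmetric]) auto
  also have "\<dots> = \<one>" using xu by (simp add: Units_r_inv)
  finally show ?thesis using x xu by (intro comm_inv_char) auto
qed

lemma subfield_pow_closed:
  assumes "subfield G R" "x \<in> G" shows "x [^] (n::nat) \<in> G"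
proof (induction n)
  case 0 then show ?case using subringE(3)[OF subfieldE(1)[OF assms(1)]] by simp
next
  case (Suc n) then show ?case
    using subringE(6)[OF subfieldE(1)[OF assms(1)]] assms(2) by simp
qed

lemma preimage_subfield:
  assumes G: "subfield G R"
  shows "subfield {x \<in> carrier R. x [^] p \<in> G} R"
proof (rule subfieldI'[OF subringI])
  note GE = subringE[OF subfieldE(1)[OF G]]
  show "{x \<in> carrier R. x [^] p \<in> G} \<subseteq> carrier R" by auto
  show "\<one> \<in> {x \<in> carrier R. x [^] p \<in> G}" using GE by simp
  show "\<ominus> h \<in> {x \<in> carrier R. x [^] p \<in> G}" if "h \<in> {x \<in> carrier R. x [^] p \<in> G}" for h
  proof -
    have h: "h \<in> carrier R" "h [^] p \<in> G" using that by auto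
    have "(\<ominus> h) [^] p \<oplus> h [^] p = \<zero>"
      using h frob_addR[of "\<ominus> h" h] p_pos by (simp add: l_neg nat_pow_zero)
    then have "(\<ominus> h) [^] p = \<ominus> (h [^] p)"
      using h by (simp add: add.inv_char[symmetric] minus_equality)
    then show ?thesis using h GE by simp
  qed
  show "h1 \<otimes> h2 \<in> {x \<in> carrier R. x [^] p \<in> G}"
    if "h1 \<in> {x \<in> carrier R. x [^] p \<in> G}" "h2 \<in> {x \<in> carrier R. x [^] p \<in> G}" for h1 h2
    using that GE by (simp add: frob_mult)
  show "h1 \<oplus> h2 \<in> {x \<in> carrier R. x [^] p \<in> G}"
    if "h1 \<in> {x \<in> carrier R. x [^] p \<in> G}" "h2 \<in> {x \<in> carrier R. x [^] p \<in> G}" for h1 h2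
    using that GE by (simp add: frob_addR)
  show "inv k \<in> {x \<in> carrier R. x [^] p \<in> G}" if "k \<in> {x \<in> carrier R. x [^] p \<in> G} - {\<zero>}" for k
  proof -
    have k: "k \<in> carrier R" "k [^] p \<in> G" "k \<noteq> \<zero>" using that by auto
    have "k [^] p \<noteq> \<zero>" using pow_nonzero k by auto
    then have "inv (k [^] p) \<in> G" using subfield_m_inv(1)[OF G] k by auto
    moreover have "inv k \<in> carrier R" using k field_Units by auto
    ultimately show ?thesis using inv_pow[OF k(1) k(3)] by simp
  qed
qed

lemma frob_image_0: "frob_image R p 0 = carrier R"
  unfolding frob_image_def by force

lemma frob_image_carrier: "frob_image R p n \<subseteq> carrier R"
  unfolding frob_image_def by auto

lemma frob_image_Suc: "x \<in> frob_image R p n \<Longrightarrow> x [^] p \<in> frob_image R p (Suc n)"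
proof -
  assume "x \<in> frob_image R p n"
  then obtain y where y: "y \<in> carrier R" "x = y [^] (p ^ n)" unfolding frob_image_def by auto
  then have "x [^] p = y [^] (p ^ Suc n)" by (simp add: nat_pow_pow mult.commute)
  then show ?thesis using y unfolding frob_image_def by auto
qed

lemma frob_image_Suc': "y \<in> frob_image R p (Suc n) \<Longrightarrow> \<exists>x \<in> frob_image R p n. y = x [^] p"
proof -
  assume "y \<in> frob_image R p (Suc n)"
  then obtain z where z: "z \<in> carrier R" "y = z [^] (p ^ Suc n)" unfolding frob_image_def by auto
  then have "y = (z [^] (p ^ n)) [^] p" by (simp add: nat_pow_pow mult.commute)
  moreover have "z [^] (p ^ n) \<in> frob_image R p n" using z unfolding frob_image_def by auto
  ultimately show ?thesis by blast
qed

end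



context frobfield
begin

lemma gen_self: "subfield L R \<Longrightarrow> generate_field R L = L"
  by (metis generate_field.incl generate_field_min_subfield1 order_refl subfieldE(3) subset_antisym subsetI)

lemma tower_subfield: "power_tower R p W \<Longrightarrow> subfield (W i) R"
  unfolding power_tower_def by auto

lemma tower_eq: "power_tower R p W \<Longrightarrow> j \<le> i \<Longrightarrow> W j = generate_field R (W i \<union> frob_image R p j)"
  unfolding power_tower_def compositum_def by auto

lemma tower_frob: "power_tower R p W \<Longrightarrow> frob_image R p i \<subseteq> W i"
  using tower_eq[of W i i] generate_field.incl[of _ "W i \<union> frob_image R p i" R] by blast

lemma tower_mono: "power_tower R p W \<Longrightarrow> W (Suc n) \<subseteq> W n"
proof -
  assume T: "power_tower R p W"
  have "W n = generate_field R (W (Suc n) \<union> frob_image R p n)" using tower_eq[OF T, of n "Suc n"] by simp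
  then show ?thesis by (auto intro: generate_field.incl)
qed

lemma tower_0: "power_tower R p W \<Longrightarrow> W 0 = carrier R"
proof -
  assume T: "power_tower R p W"
  have "W 0 = generate_field R (W 0 \<union> carrier R)" using tower_eq[OF T, of 0 0] frob_image_0 by simp
  also have "W 0 \<union> carrier R = carrier R" using subfieldE(3)[OF tower_subfield[OF T]] by auto
  also have "generate_field R (carrier R) = carrier R" using gen_self[OF carrier_is_subfield] .
  finally show ?thesis .
qed

lemma tower_pow: "power_tower R p W \<Longrightarrow> x \<in> W n \<Longrightarrow> x [^] p \<in> W (Suc n)"
proof -
  assume T: "power_tower R p W" and x: "x \<in> W n"
  let ?P = "{x \<in> carrier R. x [^] p \<in> W (Suc n)}"
  have P: "subfield ?P R" by (rule preimage_subfield[OF tower_subfield[OF T]])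
  have "W (Suc n) \<subseteq> ?P"
  proof
    fix y assume y: "y \<in> W (Suc n)"
    then have "y \<in> carrier R" using subfieldE(3)[OF tower_subfield[OF T]] by blast
    then show "y \<in> ?P" using subfield_pow_closed[OF tower_subfield[OF T] y] by simp
  qed
  moreover have "frob_image R p n \<subseteq> ?P"
    using frob_image_Suc tower_frob[OF T, of "Suc n"] frob_image_carrier by blast
  ultimately have sub: "W (Suc n) \<union> frob_image R p n \<subseteq> ?P" by (rule Un_least)
  then have "W (Suc n) \<union> frob_image R p n \<subseteq> carrier R" by auto
  then have "generate_field R (W (Suc n) \<union> frob_image R p n) \<subseteq> ?P"
    using generate_field_min_subfield1[OF _ P sub] by blast
  then have "W n \<subseteq> ?P" using tower_eq[OF T, of n "Suc n"] by simp
  then show ?thesis using x by auto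
qed

end


context frobfield
begin

lemma Span_mono_K:
  assumes "K1 \<subseteq> K2" "set Vs \<subseteq> carrier R"
  shows "Span K1 Vs \<subseteq> Span K2 Vs"
  using assms(2)
proof (induction Vs)
  case Nil then show ?case by simp
next
  case (Cons v Vs)
  have e: "Span K (v # Vs) = line_extension K v (Span K Vs)" for K by simp
  show ?case unfolding e
  proof
    fix x assume "x \<in> line_extension K1 v (Span K1 Vs)"
    then obtain k u where "k \<in> K1" "u \<in> Span K1 Vs" "x = k \<otimes> v \<oplus> u"
      unfolding line_extension_mem_iff by blast
    moreover have "Span K1 Vs \<subseteq> Span K2 Vs" using Cons by simp
    ultimately show "x \<in> line_extension K2 v (Span K2 Vs)"
      unfolding line_extension_mem_iff using assms(1) by blast
  qed
qed

lemma Span_combine_in: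
  assumes L: "subfield L R" and Vs: "set Vs \<subseteq> carrier R"
  shows "set ks \<subseteq> L \<Longrightarrow> set Us \<subseteq> Span L Vs \<Longrightarrow> combine ks Us \<in> Span L Vs"
proof (induction ks Us rule: combine.induct)
  case (1 k Ks u Us)
  then have "k \<otimes> u \<in> Span L Vs" using Span_smult_closed[OF L Vs] by auto
  moreover have "combine Ks Us \<in> Span L Vs" using 1 by auto
  ultimately show ?case using Span_subgroup_props(3)[OF L Vs] by simp
next
  case ("2_1" Us) then show ?case using Span_subgroup_props(2)[OF L Vs] by simp
next
  case ("2_2" Ks) then show ?case using Span_subgroup_props(2)[OF L Vs] by simp
qed

lemma Span_in_subfield:
  assumes L: "subfield L R" and E: "subfield E R" and LE: "L \<subseteq> E" and Vs: "set Vs \<subseteq> E"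
  shows "Span L Vs \<subseteq> E"
proof -
  have Vc: "set Vs \<subseteq> carrier R" using Vs subfieldE(3)[OF E] by blast
  have sg: "subgroup E (add_monoid R)" using subring.axioms(1)[OF subfieldE(1)[OF E]] .
  have "L <#> set Vs \<subseteq> E"
    unfolding set_mult_def using LE Vs subringE(6)[OF subfieldE(1)[OF E]] by blast
  then show ?thesis using Span_min[OF L Vc sg] by blast
qed

lemma Span_mult_closed:
  assumes L: "subfield L R" and Vs: "set Vs \<subseteq> carrier R"
    and MC: "M \<subseteq> carrier R" and MS: "M \<subseteq> Span L Vs" and VM: "set Vs \<subseteq> M"
    and Mm: "\<And>x y. x \<in> M \<Longrightarrow> y \<in> M \<Longrightarrow> x \<otimes> y \<in> M"
    and x: "x \<in> Span L Vs" and y: "y \<in> Span L Vs"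
  shows "x \<otimes> y \<in> Span L Vs"
proof -
  have Lc: "L \<subseteq> carrier R" using subfieldE(3)[OF L] .
  have Sc: "Span L Vs \<subseteq> carrier R" using Span_subgroup_props(1)[OF L Vs] .
  have vy: "v \<otimes> y \<in> Span L Vs" if v: "v \<in> set Vs" for v
  proof -
    obtain ls where ls: "set ls \<subseteq> L" "y = combine ls Vs"
      using y Span_eq_combine_set[OF L Vs] by auto
    have vc: "v \<in> carrier R" using v Vs by blast
    have "v \<otimes> y = y \<otimes> v" using vc y Sc by (simp add: m_comm subsetD)
    also have "\<dots> = combine ls (map (\<lambda>u'. u' \<otimes> v) Vs)"
      unfolding ls(2) using combine_l_distr[of ls Vs v] ls(1) Lc Vs vc by blast
    also have "\<dots> \<in> Span L Vs"
    proof (rule Span_combine_in[OF L Vs ls(1)])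
      show "set (map (\<lambda>u'. u' \<otimes> v) Vs) \<subseteq> Span L Vs"
        using Mm VM v MS by (auto simp del: Span.simps)
    qed
    finally show ?thesis .
  qed
  obtain ks where ks: "set ks \<subseteq> L" "x = combine ks Vs"
    using x Span_eq_combine_set[OF L Vs] by auto
  have "x \<otimes> y = combine ks (map (\<lambda>u'. u' \<otimes> y) Vs)"
    unfolding ks(2) using combine_l_distr[of ks Vs y] ks(1) Lc Vs y Sc by blast
  also have "\<dots> \<in> Span L Vs"
  proof (rule Span_combine_in[OF L Vs ks(1)])
    show "set (map (\<lambda>u'. u' \<otimes> y) Vs) \<subseteq> Span L Vs"
      using vy by (auto simp del: Span.simps)
  qed
  finally show ?thesis .
qed

lemma Span_contains_K:
  assumes L: "subfield L R" and Vs: "set Vs \<subseteq> carrier R" and one: "\<one> \<in> Span L Vs"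
  shows "L \<subseteq> Span L Vs"
proof
  fix k assume k: "k \<in> L"
  then have "k \<otimes> \<one> \<in> Span L Vs" using Span_smult_closed[OF L Vs] one by blast
  then show "k \<in> Span L Vs" using k subfieldE(3)[OF L] by auto
qed

lemma Span_subfield:
  assumes L: "subfield L R" and Vs: "set Vs \<subseteq> carrier R"
    and one: "\<one> \<in> Span L Vs"
    and mc: "\<And>x y. x \<in> Span L Vs \<Longrightarrow> y \<in> Span L Vs \<Longrightarrow> x \<otimes> y \<in> Span L Vs"
    and pw: "\<And>x. x \<in> Span L Vs \<Longrightarrow> x [^] p \<in> L"
  shows "subfield (Span L Vs) R"
proof (rule subfieldI'[OF subringI])
  show "Span L Vs \<subseteq> carrier R" using Span_subgroup_props(1)[OF L Vs] .
  show "\<one> \<in> Span L Vs" by (rule one)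
  show "\<ominus> h \<in> Span L Vs" if "h \<in> Span L Vs" for h using Span_subgroup_props(4)[OF L Vs] that by blast
  show "h1 \<otimes> h2 \<in> Span L Vs" if "h1 \<in> Span L Vs" "h2 \<in> Span L Vs" for h1 h2 using mc that by blast
  show "h1 \<oplus> h2 \<in> Span L Vs" if "h1 \<in> Span L Vs" "h2 \<in> Span L Vs" for h1 h2
    using Span_subgroup_props(3)[OF L Vs] that by blast
  show "inv k \<in> Span L Vs" if "k \<in> Span L Vs - {\<zero>}" for k
  proof -
    have k: "k \<in> Span L Vs" "k \<noteq> \<zero>" using that by auto
    have kc: "k \<in> carrier R" using k(1) Span_subgroup_props(1)[OF L Vs] by blast
    have kn: "k [^] (n::nat) \<in> Span L Vs" for n
      by (induction n) (use one mc k(1) in auto)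
    have y: "k [^] p \<in> L" "k [^] p \<noteq> \<zero>" using pw k pow_nonzero kc by auto
    then have iy: "inv (k [^] p) \<in> L" using subfield_m_inv(1)[OF L] by auto
    have iyc: "inv (k [^] p) \<in> carrier R" using iy subfieldE(3)[OF L] by blast
    have z: "inv (k [^] p) \<otimes> k [^] (p - 1) \<in> Span L Vs"
      using Span_smult_closed[OF L Vs] iy kn by blast
    have "k \<otimes> (inv (k [^] p) \<otimes> k [^] (p - 1)) = inv (k [^] p) \<otimes> (k [^] (p - 1) \<otimes> k)"
      using kc iyc by (simp add: m_ac)
    also have "k [^] (p - 1) \<otimes> k = k [^] p"
      using p_pos nat_pow_Suc[of k "p - 1"] by simp
    also have "inv (k [^] p) \<otimes> k [^] p = \<one>"
      using y kc field_Units by (simp add: Units_l_inv)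
    finally have "inv k = inv (k [^] p) \<otimes> k [^] (p - 1)"
      using kc iyc by (intro comm_inv_char) auto
    then show ?thesis using z by simp
  qed
qed

end


context frobfield
begin

lemma tower_step:
  assumes T: "power_tower R p W" and Us: "set Us \<subseteq> carrier R"
    and S: "Span (W (Suc m)) Us = W m"
  shows "Span (W (Suc (Suc m))) (map (\<lambda>x. x [^] p) Us) = W (Suc m)"
proof -
  define L where "L = W (Suc (Suc m))"
  define F where "F = (\<lambda>x::'a. x [^] p)"
  define Vs where "Vs = map F Us"
  define A where "A = Span L Vs"
  interpret h: ring_hom_ring R R F unfolding F_def by (rule frob_rhr)
  have Lsf: "subfield L R" unfolding L_def by (rule tower_subfield[OF T])
  have W1: "subfield (W (Suc m)) R" by (rule tower_subfield[OF T])
  have W0: "subfield (W m) R" by (rule tower_subfield[OF T])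
  have Vc: "set Vs \<subseteq> carrier R" unfolding Vs_def F_def using Us by auto
  have UW: "set Us \<subseteq> W m" using Span_base_incl[OF W1 Us] S by simp
  have FW: "F x \<in> W (Suc m)" if "x \<in> W m" for x unfolding F_def using tower_pow[OF T that] .
  have FL: "F x \<in> L" if "x \<in> W (Suc m)" for x unfolding F_def L_def using tower_pow[OF T that] .
  have VW: "set Vs \<subseteq> W (Suc m)" unfolding Vs_def using UW FW by auto
  have LW: "L \<subseteq> W (Suc m)" unfolding L_def by (rule tower_mono[OF T])
  have A_sub: "A \<subseteq> W (Suc m)" unfolding A_def by (rule Span_in_subfield[OF Lsf W1 LW VW])
  have "F ` W m = F ` Span (W (Suc m)) Us" using S by simp
  also have "\<dots> = Span (F ` W (Suc m)) Vs"
    unfolding Vs_def using h.Span_hom[of "W (Suc m)" Us] subfieldE(3)[OF W1] Us by simp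
  also have "\<dots> \<subseteq> A" unfolding A_def by (rule Span_mono_K[OF _ Vc]) (use FL in auto)
  finally have FWA: "F ` W m \<subseteq> A" .
  have one: "\<one> \<in> A"
  proof -
    have "\<one> \<in> W m" using subringE(3)[OF subfieldE(1)[OF W0]] .
    then have "F \<one> \<in> A" using FWA by auto
    then show ?thesis unfolding F_def by simp
  qed
  have W0c: "W m \<subseteq> carrier R" using subfieldE(3)[OF W0] .
  have mc: "x \<otimes> y \<in> A" if "x \<in> A" "y \<in> A" for x y
    unfolding A_def
  proof (rule Span_mult_closed[OF Lsf Vc, of "F ` W m"])
    show "F ` W m \<subseteq> carrier R" using W0c unfolding F_def by auto
    show "F ` W m \<subseteq> Span L Vs" using FWA unfolding A_def .
    show "set Vs \<subseteq> F ` W m" unfolding Vs_def using UW by auto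
    show "a \<otimes> b \<in> F ` W m" if ha: "a \<in> F ` W m" and hb: "b \<in> F ` W m" for a b
    proof -
      obtain a' where a': "a' \<in> W m" "a = F a'" using ha by blast
      obtain b' where b': "b' \<in> W m" "b = F b'" using hb by blast
      note ab = a'(1) b'(1) a'(2) b'(2)
      then have "a \<otimes> b = F (a' \<otimes> b')" unfolding F_def using W0c by (simp add: frob_mult subsetD)
      moreover have "a' \<otimes> b' \<in> W m" using ab subringE(6)[OF subfieldE(1)[OF W0]] by blast
      ultimately show ?thesis by blast
    qed
    show "x \<in> Span L Vs" "y \<in> Span L Vs" using that unfolding A_def by auto
  qed
  have pw: "x [^] p \<in> L" if "x \<in> A" for x using FL[of x] A_sub that unfolding F_def by auto
  have Asf: "subfield A R" unfolding A_def
    by (rule Span_subfield[OF Lsf Vc]) (use one mc pw in \<open>auto simp: A_def\<close>)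
  have LA: "L \<subseteq> A" unfolding A_def by (rule Span_contains_K[OF Lsf Vc]) (use one in \<open>simp add: A_def\<close>)
  have FA: "frob_image R p (Suc m) \<subseteq> A"
  proof
    fix y assume "y \<in> frob_image R p (Suc m)"
    then obtain x where x: "x \<in> frob_image R p m" "y = x [^] p" using frob_image_Suc' by blast
    then have "x \<in> W m" using tower_frob[OF T] by blast
    then show "y \<in> A" using FWA x unfolding F_def by auto
  qed
  have H: "L \<union> frob_image R p (Suc m) \<subseteq> carrier R"
    using subfieldE(3)[OF Lsf] frob_image_carrier by blast
  have "W (Suc m) = generate_field R (L \<union> frob_image R p (Suc m))"
    unfolding L_def using tower_eq[OF T, of "Suc m" "Suc (Suc m)"] by simp
  also have "\<dots> \<subseteq> A" by (rule generate_field_min_subfield1[OF H Asf]) (use LA FA in blast)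
  finally have "W (Suc m) \<subseteq> A" .
  then show ?thesis using A_sub unfolding A_def L_def Vs_def F_def by blast
qed

end


context frobfield
begin

lemma Span_eq_gen:
  assumes L: "subfield L R" and Vs: "set Vs \<subseteq> carrier R"
    and one: "\<one> \<in> Span L Vs"
    and mc: "\<And>x y. x \<in> Span L Vs \<Longrightarrow> y \<in> Span L Vs \<Longrightarrow> x \<otimes> y \<in> Span L Vs"
    and pw: "\<And>x. x \<in> carrier R \<Longrightarrow> x [^] p \<in> L"
    and Yc: "Y \<subseteq> carrier R" and YS: "Y \<subseteq> Span L Vs"
    and VG: "set Vs \<subseteq> generate_field R (L \<union> Y)"
  shows "Span L Vs = generate_field R (L \<union> Y)"
proof
  have H: "L \<union> Y \<subseteq> carrier R" using subfieldE(3)[OF L] Yc by blast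
  have G: "subfield (generate_field R (L \<union> Y)) R" by (rule generate_field_is_subfield[OF H])
  have LG: "L \<subseteq> generate_field R (L \<union> Y)" by (auto intro: generate_field.incl)
  show "Span L Vs \<subseteq> generate_field R (L \<union> Y)" by (rule Span_in_subfield[OF L G LG VG])
  have Sc: "Span L Vs \<subseteq> carrier R" using Span_subgroup_props(1)[OF L Vs] .
  have Ssf: "subfield (Span L Vs) R"
    by (rule Span_subfield[OF L Vs one mc]) (use pw Sc in blast)+
  have "L \<subseteq> Span L Vs" by (rule Span_contains_K[OF L Vs one])
  then show "generate_field R (L \<union> Y) \<subseteq> Span L Vs"
    using generate_field_min_subfield1[OF H Ssf] YS by blast
qed

lemma finite_gen_Span:
  assumes L: "subfield L R" and pw: "\<And>x. x \<in> carrier R \<Longrightarrow> x [^] p \<in> L"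
    and fin: "finite T" and Tc: "T \<subseteq> carrier R"
  shows "\<exists>Vs. set Vs \<subseteq> carrier R \<and> Span L Vs = generate_field R (L \<union> T)"
  using fin Tc
proof (induction T rule: finite_induct)
  case empty
  have Lc: "L \<subseteq> carrier R" using subfieldE(3)[OF L] .
  have one_L: "\<one> \<in> L" using subringE(3)[OF subfieldE(1)[OF L]] .
  have V: "set [\<one>] \<subseteq> carrier R" by simp
  have one: "\<one> \<in> Span L [\<one>]" using Span_base_incl[OF L V] by simp
  have LS: "L \<subseteq> Span L [\<one>]" by (rule Span_contains_K[OF L V one])
  have "Span L [\<one>] = generate_field R (L \<union> {})"
  proof (rule Span_eq_gen[OF L V one _ pw])
    show "x \<otimes> y \<in> Span L [\<one>]" if "x \<in> Span L [\<one>]" "y \<in> Span L [\<one>]" for x y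
      by (rule Span_mult_closed[OF L V Lc LS _ _ that])
         (use one_L subringE(6)[OF subfieldE(1)[OF L]] in auto)
    show "set [\<one>] \<subseteq> generate_field R (L \<union> {})" by (simp add: generate_field.one)
  qed auto
  then show ?case using V by blast
next
  case (insert s T)
  have sc: "s \<in> carrier R" and Tc: "T \<subseteq> carrier R" using insert by auto
  obtain Vs where Vs: "set Vs \<subseteq> carrier R" and VE: "Span L Vs = generate_field R (L \<union> T)"
    using insert Tc by blast
  define E where "E = generate_field R (L \<union> T)"
  have Lc: "L \<subseteq> carrier R" using subfieldE(3)[OF L] .
  have HE: "L \<union> T \<subseteq> carrier R" using Lc Tc by blast
  have Esf: "subfield E R" unfolding E_def by (rule generate_field_is_subfield[OF HE])
  have Ec: "E \<subseteq> carrier R" using subfieldE(3)[OF Esf] .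
  have LE: "L \<subseteq> E" unfolding E_def by (auto intro: generate_field.incl)
  have TE: "T \<subseteq> E" unfolding E_def by (auto intro: generate_field.incl)
  have VsE: "set Vs \<subseteq> E" using Span_base_incl[OF L Vs] VE unfolding E_def by simp
  note Em = subringE(6)[OF subfieldE(1)[OF Esf]]
  define Vs' where "Vs' = concat (map (\<lambda>j. map (\<lambda>v. v \<otimes> s [^] j) Vs) [0..<p])"
  have setVs': "set Vs' = {v \<otimes> s [^] j | v j. v \<in> set Vs \<and> j < p}"
    unfolding Vs'_def by fastforce
  have Vc': "set Vs' \<subseteq> carrier R" unfolding setVs' using Vs sc by auto
  define M where "M = {e \<otimes> s [^] (j::nat) | e j. e \<in> E}"
  have MC: "M \<subseteq> carrier R" unfolding M_def using Ec sc by auto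
  have Mm: "x \<otimes> y \<in> M" if hx: "x \<in> M" and hy: "y \<in> M" for x y
  proof -
    obtain e j where x: "e \<in> E" "x = e \<otimes> s [^] (j::nat)" using hx unfolding M_def by blast
    obtain e' j' where y: "e' \<in> E" "y = e' \<otimes> s [^] (j'::nat)" using hy unfolding M_def by blast
    have ec: "e \<in> carrier R" "e' \<in> carrier R" using x y Ec by auto
    have "x \<otimes> y = (e \<otimes> e') \<otimes> (s [^] j \<otimes> s [^] j')" using x y ec sc by (simp add: m_ac)
    also have "\<dots> = (e \<otimes> e') \<otimes> s [^] (j + j')" using sc by (simp add: nat_pow_mult)
    finally show ?thesis unfolding M_def using Em x y by blast
  qed
  have VM: "set Vs' \<subseteq> M" unfolding setVs' M_def using VsE by blast
  have MS: "M \<subseteq> Span L Vs'"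
  proof
    fix x assume "x \<in> M"
    then obtain e j where x: "e \<in> E" "x = e \<otimes> s [^] (j::nat)" unfolding M_def by auto
    define q r where "q = j div p" and "r = j mod p"
    have jqr: "j = p * q + r" unfolding q_def r_def by simp
    have rp: "r < p" unfolding r_def using p_pos by simp
    have spE: "s [^] p \<in> E" using pw[OF sc] LE by blast
    define e' where "e' = e \<otimes> (s [^] p) [^] q"
    have e'E: "e' \<in> E" unfolding e'_def using Em x(1) subfield_pow_closed[OF Esf spE] by blast
    have ec: "e \<in> carrier R" using x Ec by auto
    have "x = e \<otimes> ((s [^] p) [^] q \<otimes> s [^] r)"
      using x(2) jqr sc by (simp add: nat_pow_pow nat_pow_mult)
    also have "\<dots> = e' \<otimes> s [^] r" unfolding e'_def using ec sc by (simp add: m_assoc)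
    finally have xe: "x = e' \<otimes> s [^] r" .
    obtain ks where ks: "set ks \<subseteq> L" "e' = combine ks Vs"
      using e'E VE Span_eq_combine_set[OF L Vs] unfolding E_def by auto
    have "x = combine ks (map (\<lambda>v. v \<otimes> s [^] r) Vs)"
      unfolding xe ks(2) using combine_l_distr[of ks Vs "s [^] r"] ks(1) Lc Vs sc by blast
    also have "\<dots> \<in> Span L Vs'"
    proof (rule Span_combine_in[OF L Vc' ks(1)])
      have "set (map (\<lambda>v. v \<otimes> s [^] r) Vs) \<subseteq> set Vs'" unfolding setVs' using rp by auto
      then show "set (map (\<lambda>v. v \<otimes> s [^] r) Vs) \<subseteq> Span L Vs'"
        using Span_base_incl[OF L Vc'] by blast
    qed
    finally show "x \<in> Span L Vs'" .
  qed
  have oneE: "\<one> \<in> E" using subringE(3)[OF subfieldE(1)[OF Esf]] .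
  have one: "\<one> \<in> Span L Vs'"
  proof -
    have "\<one> \<otimes> s [^] (0::nat) \<in> M" unfolding M_def using oneE by blast
    then show ?thesis using MS by (auto simp del: Span.simps)
  qed
  have YS: "insert s T \<subseteq> Span L Vs'"
  proof -
    have "\<one> \<otimes> s [^] (1::nat) \<in> M" unfolding M_def using oneE by blast
    then have "s \<in> M" using sc by simp
    moreover have "t \<in> M" if "t \<in> T" for t
    proof -
      have "t \<otimes> s [^] (0::nat) \<in> M" unfolding M_def using TE that by blast
      then show ?thesis using that Tc by auto
    qed
    ultimately show ?thesis using MS by blast
  qed
  have HX: "L \<union> insert s T \<subseteq> carrier R" using Lc Tc sc by blast
  have G: "subfield (generate_field R (L \<union> insert s T)) R" by (rule generate_field_is_subfield[OF HX])
  have EG: "E \<subseteq> generate_field R (L \<union> insert s T)"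
    unfolding E_def by (rule mono_generate_field[OF _ HX]) blast
  have sG: "s \<in> generate_field R (L \<union> insert s T)" by (auto intro: generate_field.incl)
  have VG: "set Vs' \<subseteq> generate_field R (L \<union> insert s T)"
    unfolding setVs' using VsE EG subfield_pow_closed[OF G sG] subringE(6)[OF subfieldE(1)[OF G]] by blast
  have "Span L Vs' = generate_field R (L \<union> insert s T)"
  proof (rule Span_eq_gen[OF L Vc' one _ pw _ YS VG])
    show "x \<otimes> y \<in> Span L Vs'" if "x \<in> Span L Vs'" "y \<in> Span L Vs'" for x y
      by (rule Span_mult_closed[OF L Vc' MC MS VM Mm that])
    show "insert s T \<subseteq> carrier R" using sc Tc by blast
  qed
  then show ?case using Vc' by blast
qed

end


context frobfield
begin

lemma tower_base:
  assumes T: "power_tower R p W"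
    and fg: "\<exists>S. finite S \<and> S \<subseteq> carrier R \<and>
           generate_field R ((\<Inter>n. frob_image R p n) \<union> S) = carrier R"
  shows "\<exists>Us. set Us \<subseteq> carrier R \<and> Span (W (Suc 0)) Us = W 0"
proof -
  define L where "L = W (Suc 0)"
  have L: "subfield L R" unfolding L_def by (rule tower_subfield[OF T])
  have pw: "x [^] p \<in> L" if "x \<in> carrier R" for x
  proof -
    have "x \<in> frob_image R p 0" using that frob_image_0 by simp
    then have "x [^] p \<in> frob_image R p (Suc 0)" by (rule frob_image_Suc)
    then show ?thesis unfolding L_def using tower_frob[OF T] by blast
  qed
  obtain S where S: "finite S" "S \<subseteq> carrier R"
    "generate_field R ((\<Inter>n. frob_image R p n) \<union> S) = carrier R" using fg by blast
  obtain Vs where Vs: "set Vs \<subseteq> carrier R" "Span L Vs = generate_field R (L \<union> S)"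
    using finite_gen_Span[OF L pw S(1) S(2)] by blast
  have Lc: "L \<subseteq> carrier R" using subfieldE(3)[OF L] .
  have kL: "(\<Inter>n. frob_image R p n) \<subseteq> L"
    using tower_frob[OF T, of "Suc 0"] unfolding L_def by blast
  have "carrier R \<subseteq> generate_field R (L \<union> S)"
    using S(3) mono_generate_field[of "(\<Inter>n. frob_image R p n) \<union> S" "L \<union> S"] kL Lc S(2) by auto
  moreover have "Span L Vs \<subseteq> carrier R" using Span_subgroup_props(1)[OF L Vs(1)] .
  ultimately have "Span L Vs = carrier R" using Vs(2) by blast
  then show ?thesis using Vs(1) tower_0[OF T] unfolding L_def by auto
qed

lemma filter_base_len:
  assumes K: "subfield K R"
  shows "set Us \<subseteq> carrier R \<Longrightarrow> \<exists>Vs. independent K Vs \<and> Span K Vs = Span K Us \<and> length Vs \<le> length Us"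
proof (induction Us)
  case Nil thus ?case by auto
next
  case (Cons u Us)
  then obtain Vs where Vs: "independent K Vs" "Span K Vs = Span K Us" "length Vs \<le> length Us"
    by auto
  show ?case
  proof (cases "u \<in> Span K Us")
    case True
    hence "Span K (u # Us) = Span K Us"
      using Span_base_incl[OF K] mono_Span_subset[OF K] mono_Span[OF K] Cons.prems
      by (metis insert_subset list.simps(15) subset_antisym)
    thus ?thesis using Vs by (metis le_Suc_eq length_Cons)
  next
    case False
    hence "Span K (u # Vs) = Span K (u # Us)" and "independent K (u # Vs)"
      using li_Cons[of u K Vs] Cons(2) Vs by auto
    thus ?thesis using Vs(3) by (metis Suc_le_mono length_Cons)
  qed
qed

lemma tower_fd:
  assumes T: "power_tower R p W"
    and fg: "\<exists>S. finite S \<and> S \<subseteq> carrier R \<and>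
           generate_field R ((\<Inter>n. frob_image R p n) \<union> S) = carrier R"
  shows "\<exists>Us. set Us \<subseteq> carrier R \<and> Span (W (Suc m)) Us = W m"
proof (induction m)
  case 0 then show ?case using tower_base[OF T fg] by simp
next
  case (Suc m)
  then obtain Us where "set Us \<subseteq> carrier R" "Span (W (Suc m)) Us = W m" by blast
  then have "set (map (\<lambda>x. x [^] p) Us) \<subseteq> carrier R \<and>
     Span (W (Suc (Suc m))) (map (\<lambda>x. x [^] p) Us) = W (Suc m)"
    using tower_step[OF T] by auto
  then show ?case by blast
qed

lemma tower_dim:
  assumes T: "power_tower R p W"
    and fg: "\<exists>S. finite S \<and> S \<subseteq> carrier R \<and>
           generate_field R ((\<Inter>n. frob_image R p n) \<union> S) = carrier R"
  shows "dim (W (Suc (Suc m))) (W (Suc m)) \<le> dim (W (Suc m)) (W m)"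
proof -
  have W1: "subfield (W (Suc m)) R" by (rule tower_subfield[OF T])
  have W2: "subfield (W (Suc (Suc m))) R" by (rule tower_subfield[OF T])
  obtain Us where Us: "set Us \<subseteq> carrier R" "Span (W (Suc m)) Us = W m"
    using tower_fd[OF T fg] by blast
  obtain Vs where Vs: "independent (W (Suc m)) Vs" "Span (W (Suc m)) Vs = W m"
    using filter_base_len[OF W1 Us(1)] Us(2) by auto
  have Vc: "set Vs \<subseteq> carrier R" using independent_in_carrier[OF Vs(1)] .
  have d1: "dim (W (Suc m)) (W m) = length Vs"
    using dimI[OF W1 dimension_independent[OF Vs(1)]] Vs(2) unfolding over_def by simp
  have St: "Span (W (Suc (Suc m))) (map (\<lambda>x. x [^] p) Vs) = W (Suc m)"
    by (rule tower_step[OF T Vc Vs(2)])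
  have Vc': "set (map (\<lambda>x. x [^] p) Vs) \<subseteq> carrier R" using Vc by auto
  obtain Zs where Zs: "independent (W (Suc (Suc m))) Zs" "Span (W (Suc (Suc m))) Zs = W (Suc m)"
     "length Zs \<le> length (map (\<lambda>x. x [^] p) Vs)"
    using filter_base_len[OF W2 Vc'] St by auto
  have d2: "dim (W (Suc (Suc m))) (W (Suc m)) = length Zs"
    using dimI[OF W2 dimension_independent[OF Zs(1)]] Zs(2) unfolding over_def by simp
  show ?thesis using d1 d2 Zs(3) by simp
qed

end

theorem mainTheorem7:
  fixes R :: "('a, 'b) ring_scheme" and p :: nat and W :: "nat \<Rightarrow> 'a set"
  assumes "field R"
    and "Factorial_Ring.prime p"
    and "add_pow R p \<one>\<^bsub>R\<^esub> = \<zero>\<^bsub>R\<^esub>"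
    and "\<exists>S. finite S \<and> S \<subseteq> carrier R \<and>
           generate_field R ((\<Inter>n. frob_image R p n) \<union> S) = carrier R"
    and "power_tower R p W"
  shows "\<forall>n\<ge>1. ring.dim R (W (n + 1)) (W n) \<le> ring.dim R (W n) (W (n - 1))"
proof -
  interpret frobfield R p
    by (rule frobfield.intro[OF assms(1)]) (unfold_locales, use assms(2,3) in auto)
  show ?thesis
  proof (intro allI impI)
    fix n :: nat assume "n \<ge> 1"
    then obtain m where m: "n = Suc m" by (cases n) auto
    show "dim (W (n + 1)) (W n) \<le> dim (W n) (W (n - 1))"
      using tower_dim[OF assms(5) assms(4), of m] m by simp
  qed
qed


end
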